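(* Let $N(r)\in\mathbb{R}[[r]]$, $r\in\mathbb{R}^d$, be a formal power series which is non-degenerate, i.e. there is no unit vector $\gamma\in\mathbb{R}^d$ with $\langle\partial_rN(r),\gamma\rangle=0$ as a formal series. Then there exist $p\in\mathbb{N}$ and $\sigma>0$ such that for every $k\in\mathbb{Z}^d\setminus\{0\}$ there is a unit vector $u_k\in\mathbb{R}^d$ for which the series $f_k(r)=\langle k/|k|,\partial_rN(r)\rangle$ satisfies $\max_{0\le j\le p}\left|\partial_t^j f_k(tu_k)\big|_{t=0}\right|\ge\sigma$.
   Context: For a formal series $f\in\mathbb{R}[[r]]$ and $u\in\mathbb{R}^d$, $\partial_t^jf(tu)|_{t=0}$ is $j!$ times the coefficient of $t^j$ in the formal series $t\mapsto f(tu)$. *)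

theory Defs
  imports "HOL-Analysis.Analysis"
begin

text \<open>A formal power series in d real variables r = (r_i), i of finite type 'd, is
represented by its coefficient function: N alpha is the coefficient of the monomial
r^alpha = prod_i r_i^(alpha i), for multi-indices alpha :: 'd => nat.\<close>

type_synonym 'd mfps = "('d \<Rightarrow> nat) \<Rightarrow> real"

text \<open>Coefficients of the formal series <gamma, d_r N(r)> = sum_i gamma_i * d N / d r_i.
The coefficient of r^alpha in d N / d r_i is (alpha i + 1) * N (alpha + e_i).\<close>
definition grad_pair :: "('d::finite) mfps \<Rightarrow> real^'d \<Rightarrow> 'd mfps" where
  "grad_pair N \<gamma> = (\<lambda>\<alpha>. \<Sum>i\<in>UNIV. \<gamma> $ i * real (\<alpha> i + 1) * N (\<alpha>(i := \<alpha> i + 1)))"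

text \<open>Coefficient of t^j in the formal series t |-> f(t u).\<close>
definition ray_coeff :: "('d::finite) mfps \<Rightarrow> real^'d \<Rightarrow> nat \<Rightarrow> real" where
  "ray_coeff f u j = (\<Sum>\<alpha>\<in>{\<alpha>::'d \<Rightarrow> nat. (\<Sum>i\<in>UNIV. \<alpha> i) = j}. f \<alpha> * (\<Prod>i\<in>UNIV. (u $ i) ^ (\<alpha> i)))"

text \<open>d_t^j f(t u) at t = 0, i.e. j! times the coefficient of t^j.\<close>
definition ray_deriv :: "('d::finite) mfps \<Rightarrow> real^'d \<Rightarrow> nat \<Rightarrow> real" where
  "ray_deriv f u j = fact j * ray_coeff f u j"

end

theory Submission
  imports Defs
begin

lemma poly_vanish:
  fixes c :: "('d \<Rightarrow> nat) \<Rightarrow> real"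
  assumes "finite I"
  shows "finite S \<Longrightarrow> (\<forall>\<alpha>\<in>S. \<forall>i. i \<notin> I \<longrightarrow> \<alpha> i = 0)
    \<Longrightarrow> (\<forall>x::'d\<Rightarrow>real. (\<Sum>\<alpha>\<in>S. c \<alpha> * (\<Prod>i\<in>I. x i ^ \<alpha> i)) = 0) \<Longrightarrow> \<alpha> \<in> S \<Longrightarrow> c \<alpha> = 0"
  using assms
proof (induction I arbitrary: S c \<alpha> rule: finite_induct)
  case empty
  have z: "\<And>\<beta>. \<beta> \<in> S \<Longrightarrow> \<beta> = (\<lambda>_. 0)" using empty.prems(2) by auto
  have "S = {\<alpha>}"
  proof (intro set_eqI iffI)
    fix \<beta> assume b: "\<beta> \<in> S"
    have "\<beta> = \<alpha>" using z[OF b] z[OF empty.prems(4)] by simp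
    then show "\<beta> \<in> {\<alpha>}" by simp
  qed (use empty.prems(4) in simp)
  then show ?case using empty.prems(3) by simp
next
  case (insert i I)
  define n0 where "n0 = \<alpha> i"
  define S0 where "S0 = {\<beta>\<in>S. \<beta> i = n0}"
  define S' where "S' = (\<lambda>\<beta>. \<beta>(i:=0)) ` S0"
  define c' where "c' = (\<lambda>\<beta>. c (\<beta>(i:=n0)))"
  have fin: "finite S" by fact
  have "\<forall>x::'d\<Rightarrow>real. (\<Sum>\<beta>\<in>S'. c' \<beta> * (\<Prod>k\<in>I. x k ^ \<beta> k)) = 0"
  proof
    fix x :: "'d \<Rightarrow> real"
    define N where "N = (\<lambda>\<beta>. \<beta> i) ` S"
    define Q where "Q = (\<lambda>n. \<Sum>\<beta>\<in>{\<beta>\<in>S. \<beta> i = n}. c \<beta> * (\<Prod>k\<in>I. x k ^ \<beta> k))"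
    have finN: "finite N" using fin N_def by simp
    define M where "M = Max (insert 0 N)"
    define a where "a = (\<lambda>n. if n \<in> N then Q n else 0)"
    have "\<forall>t. (\<Sum>n\<le>M. a n * t ^ n) = 0"
    proof
      fix t :: real
      have "(\<Sum>n\<le>M. a n * t ^ n) = (\<Sum>n\<in>N. Q n * t ^ n)"
        unfolding a_def
        apply (rule sum.mono_neutral_cong_right)
        using finN by (auto simp: M_def)
      also have "\<dots> = (\<Sum>n\<in>N. \<Sum>\<beta>\<in>{\<beta>\<in>S. \<beta> i = n}. c \<beta> * (t ^ \<beta> i * (\<Prod>k\<in>I. x k ^ \<beta> k)))"
        unfolding Q_def by (auto simp: sum_distrib_right intro!: sum.cong)
      also have "\<dots> = (\<Sum>\<beta>\<in>S. c \<beta> * (t ^ \<beta> i * (\<Prod>k\<in>I. x k ^ \<beta> k)))"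
        by (rule sum.group) (use fin finN N_def in auto)
      also have "\<dots> = (\<Sum>\<beta>\<in>S. c \<beta> * (\<Prod>k\<in>insert i I. (x(i:=t)) k ^ \<beta> k))"
      proof (rule sum.cong)
        fix \<beta> assume "\<beta> \<in> S"
        have "(\<Prod>k\<in>I. (x(i:=t)) k ^ \<beta> k) = (\<Prod>k\<in>I. x k ^ \<beta> k)"
          using insert.hyps(2) by (intro prod.cong) auto
        then show "c \<beta> * (t ^ \<beta> i * (\<Prod>k\<in>I. x k ^ \<beta> k)) = c \<beta> * (\<Prod>k\<in>insert i I. (x(i:=t)) k ^ \<beta> k)"
          using insert.hyps by simp
      qed simp
      also have "\<dots> = 0" using insert.prems(3) by blast
      finally show "(\<Sum>n\<le>M. a n * t ^ n) = 0" .
    qed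
    then have "\<forall>k\<le>M. a k = 0" using polyfun_eq_0[of a M] by blast
    moreover have n0N: "n0 \<in> N" using insert.prems(4) N_def n0_def by auto
    moreover have "n0 \<le> M" using n0N finN M_def by auto
    ultimately have Q0: "Q n0 = 0" by (auto simp: a_def)
    have inj: "inj_on (\<lambda>\<beta>. \<beta>(i:=0)) S0"
    proof (rule inj_onI)
      fix \<beta> \<gamma> assume b: "\<beta> \<in> S0" and g: "\<gamma> \<in> S0" and eq: "\<beta>(i:=0) = \<gamma>(i:=0)"
      show "\<beta> = \<gamma>"
      proof
        fix k show "\<beta> k = \<gamma> k"
        proof (cases "k = i")
          case True then show ?thesis using b g unfolding S0_def by simp
        next
          case False then show ?thesis using fun_cong[OF eq, of k] by simp
        qed
      qed
    qed
    have "(\<Sum>\<beta>\<in>S'. c' \<beta> * (\<Prod>k\<in>I. x k ^ \<beta> k)) = (\<Sum>\<beta>\<in>S0. c' (\<beta>(i:=0)) * (\<Prod>k\<in>I. x k ^ (\<beta>(i:=0)) k))"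
      unfolding S'_def by (rule sum.reindex[OF inj, unfolded comp_def])
    also have "\<dots> = Q n0"
      unfolding Q_def S0_def
    proof (rule sum.cong)
      fix \<beta> assume b: "\<beta> \<in> {\<beta> \<in> S. \<beta> i = n0}"
      have "(\<Prod>k\<in>I. x k ^ (\<beta>(i:=0)) k) = (\<Prod>k\<in>I. x k ^ \<beta> k)"
        using insert.hyps(2) by (intro prod.cong) auto
      moreover have "c' (\<beta>(i:=0)) = c \<beta>" using b unfolding c'_def by (simp add: fun_upd_idem)
      ultimately show "c' (\<beta>(i:=0)) * (\<Prod>k\<in>I. x k ^ (\<beta>(i:=0)) k) = c \<beta> * (\<Prod>k\<in>I. x k ^ \<beta> k)" by simp
    qed simp
    finally show "(\<Sum>\<beta>\<in>S'. c' \<beta> * (\<Prod>k\<in>I. x k ^ \<beta> k)) = 0" using Q0 by simp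
  qed
  moreover have "finite S'" using fin unfolding S'_def S0_def by simp
  moreover have "\<forall>\<beta>\<in>S'. \<forall>k. k \<notin> I \<longrightarrow> \<beta> k = 0"
    using insert.prems(2) unfolding S'_def S0_def by auto
  moreover have "\<alpha>(i:=0) \<in> S'" using insert.prems(4) unfolding S'_def S0_def n0_def by auto
  ultimately have "c' (\<alpha>(i:=0)) = 0" using insert.IH by blast
  then show ?case unfolding c'_def n0_def by simp
qed

lemma finite_deg: "finite {\<alpha>::'d::finite \<Rightarrow> nat. (\<Sum>i\<in>UNIV. \<alpha> i) = j}"
proof (rule finite_subset)
  show "{\<alpha>::'d \<Rightarrow> nat. (\<Sum>i\<in>UNIV. \<alpha> i) = j} \<subseteq> PiE UNIV (\<lambda>_. {0..j})"
  proof
    fix \<alpha> :: "'d \<Rightarrow> nat" assume "\<alpha> \<in> {\<alpha>. (\<Sum>i\<in>UNIV. \<alpha> i) = j}"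
    then have "\<forall>i. \<alpha> i \<le> j" using member_le_sum[of _ UNIV \<alpha>] by auto
    then show "\<alpha> \<in> PiE UNIV (\<lambda>_. {0..j})" by (simp add: PiE_UNIV_domain)
  qed
  show "finite (PiE (UNIV::'d set) (\<lambda>_. {0..j}))" by (rule finite_PiE) auto
qed

lemma ray_coeff_scale: "ray_coeff f (s *\<^sub>R w) j = s ^ j * ray_coeff f w j"
  unfolding ray_coeff_def sum_distrib_left
proof (rule sum.cong)
  fix \<alpha> :: "'a \<Rightarrow> nat" assume a: "\<alpha> \<in> {\<alpha>. (\<Sum>i\<in>UNIV. \<alpha> i) = j}"
  have "(\<Prod>i\<in>UNIV. ((s *\<^sub>R w) $ i) ^ \<alpha> i) = (\<Prod>i\<in>UNIV. s ^ \<alpha> i * (w $ i) ^ \<alpha> i)"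
    by (simp add: power_mult_distrib)
  also have "\<dots> = s ^ (\<Sum>i\<in>UNIV. \<alpha> i) * (\<Prod>i\<in>UNIV. (w $ i) ^ \<alpha> i)"
    by (simp add: prod.distrib power_sum)
  finally show "f \<alpha> * (\<Prod>i\<in>UNIV. ((s *\<^sub>R w) $ i) ^ \<alpha> i) = s ^ j * (f \<alpha> * (\<Prod>i\<in>UNIV. (w $ i) ^ \<alpha> i))"
    using a by simp
qed simp

lemma exists_nonzero:
  fixes f :: "('d::finite \<Rightarrow> nat) \<Rightarrow> real"
  assumes "f \<noteq> (\<lambda>_. 0)"
  shows "\<exists>u j. norm u = 1 \<and> ray_deriv f u j \<noteq> 0"
proof -
  obtain \<alpha>0 where a0: "f \<alpha>0 \<noteq> 0" using assms by auto
  define j where "j = (\<Sum>i\<in>UNIV. \<alpha>0 i)"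
  define S where "S = {\<alpha>::'d \<Rightarrow> nat. (\<Sum>i\<in>UNIV. \<alpha> i) = j}"
  have "\<exists>x::'d\<Rightarrow>real. (\<Sum>\<alpha>\<in>S. f \<alpha> * (\<Prod>i\<in>UNIV. x i ^ \<alpha> i)) \<noteq> 0"
  proof (rule ccontr)
    assume "\<not> ?thesis"
    then have "f \<alpha>0 = 0"
      using poly_vanish[of UNIV S f \<alpha>0] finite_deg[of j] unfolding S_def j_def by auto
    then show False using a0 by simp
  qed
  then obtain x :: "'d \<Rightarrow> real" where x: "(\<Sum>\<alpha>\<in>S. f \<alpha> * (\<Prod>i\<in>UNIV. x i ^ \<alpha> i)) \<noteq> 0" by blast
  define v where "v = (\<chi> i. x i)"
  have rv: "ray_coeff f v j \<noteq> 0" using x unfolding ray_coeff_def v_def S_def by simp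
  obtain w :: "real^'d" where w1: "norm w = 1" and vw: "v = norm v *\<^sub>R w"
  proof (cases "v = 0")
    case True
    then show ?thesis using that[of "axis undefined 1"] by simp
  next
    case False
    then show ?thesis using that[of "sgn v"] by (simp add: norm_sgn sgn_div_norm)
  qed
  have "ray_coeff f w j \<noteq> 0" using rv ray_coeff_scale[of f "norm v" w j] vw by auto
  then have "ray_deriv f w j \<noteq> 0" unfolding ray_deriv_def by simp
  then show ?thesis using w1 by blast
qed

lemma cont_rd: "continuous_on UNIV (\<lambda>\<gamma>. ray_deriv (grad_pair N \<gamma>) w j)"
  unfolding ray_deriv_def ray_coeff_def grad_pair_def
  by (intro continuous_intros)

theorem lemma5p1:
  fixes N :: "('d::finite \<Rightarrow> nat) \<Rightarrow> real"
  assumes nondeg: "\<not> (\<exists>\<gamma>::real^'d. norm \<gamma> = 1 \<and> grad_pair N \<gamma> = (\<lambda>_. 0))"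
  shows "\<exists>p::nat. \<exists>\<sigma>::real. \<sigma> > 0 \<and>
           (\<forall>k::int^'d. k \<noteq> 0 \<longrightarrow>
              (\<exists>u::real^'d. norm u = 1 \<and>
                 Max ((\<lambda>j. \<bar>ray_deriv (grad_pair N (sgn (\<chi> i. real_of_int (k $ i)))) u j\<bar>) ` {0..p}) \<ge> \<sigma>))"
proof -
  define U where "U = {\<gamma>::real^'d. norm \<gamma> = 1}"
  have "\<forall>\<gamma>\<in>U. \<exists>u j. norm u = 1 \<and> ray_deriv (grad_pair N \<gamma>) u j \<noteq> 0"
    using nondeg exists_nonzero unfolding U_def by blast
  then obtain uu jj where uj: "\<And>\<gamma>. \<gamma> \<in> U \<Longrightarrow> norm (uu \<gamma>) = 1 \<and> ray_deriv (grad_pair N \<gamma>) (uu \<gamma>) (jj \<gamma>) \<noteq> 0"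
    by metis
  define g where "g = (\<lambda>c \<gamma>. \<bar>ray_deriv (grad_pair N \<gamma>) (uu c) (jj c)\<bar>)"
  define Ob where "Ob = (\<lambda>c. {\<gamma>. g c c / 2 < g c \<gamma>})"
  have cU: "compact U" unfolding U_def using compact_sphere[of "0::real^'d" 1]
    by (simp add: sphere_def dist_norm)
  have opn: "\<And>c. c \<in> U \<Longrightarrow> open (Ob c)"
    unfolding Ob_def g_def
    by (intro open_Collect_less continuous_intros cont_rd)
  have cov: "U \<subseteq> (\<Union>c\<in>U. Ob c)"
  proof
    fix \<gamma> assume "\<gamma> \<in> U"
    then have "g \<gamma> \<gamma> > 0" using uj unfolding g_def by auto
    then show "\<gamma> \<in> (\<Union>c\<in>U. Ob c)" using \<open>\<gamma> \<in> U\<close> unfolding Ob_def by (intro UN_I[of \<gamma>]) auto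
  qed
  obtain C where CU: "C \<subseteq> U" and fC: "finite C" and covC: "U \<subseteq> (\<Union>c\<in>C. Ob c)"
    using compactE_image[OF cU opn cov] by blast
  have "axis undefined 1 \<in> U" unfolding U_def by simp
  then have neC: "C \<noteq> {}" using covC by auto
  define p where "p = Max (jj ` C)"
  define \<sigma> where "\<sigma> = Min ((\<lambda>c. g c c / 2) ` C)"
  have pos: "\<And>c. c \<in> C \<Longrightarrow> g c c / 2 > 0" using uj CU unfolding g_def by fastforce
  have "\<sigma> > 0" unfolding \<sigma>_def using fC neC pos by (subst Min_gr_iff) auto
  moreover have "\<forall>k::int^'d. k \<noteq> 0 \<longrightarrow>
              (\<exists>u::real^'d. norm u = 1 \<and>
                 Max ((\<lambda>j. \<bar>ray_deriv (grad_pair N (sgn (\<chi> i. real_of_int (k $ i)))) u j\<bar>) ` {0..p}) \<ge> \<sigma>)"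
  proof (intro allI impI)
    fix k :: "int^'d" assume k0: "k \<noteq> 0"
    define v where "v = (\<chi> i. real_of_int (k $ i))"
    have "v \<noteq> 0"
    proof
      assume "v = 0"
      then have "\<forall>i. k $ i = 0" unfolding v_def by (metis of_int_eq_0_iff vec_lambda_beta zero_index)
      then show False using k0 by (simp add: vec_eq_iff)
    qed
    then have "sgn v \<in> U" unfolding U_def by (simp add: norm_sgn)
    then obtain c where c: "c \<in> C" and inO: "sgn v \<in> Ob c" using covC by blast
    have "\<sigma> \<le> g c c / 2" unfolding \<sigma>_def using fC c by (intro Min_le) auto
    also have "\<dots> < g c (sgn v)" using inO unfolding Ob_def by simp
    also have "\<dots> \<le> Max ((\<lambda>j. \<bar>ray_deriv (grad_pair N (sgn v)) (uu c) j\<bar>) ` {0..p})"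
      unfolding g_def
    proof (rule Max_ge)
      have "jj c \<le> p" unfolding p_def using fC c by simp
      then show "\<bar>ray_deriv (grad_pair N (sgn v)) (uu c) (jj c)\<bar> \<in> (\<lambda>j. \<bar>ray_deriv (grad_pair N (sgn v)) (uu c) j\<bar>) ` {0..p}"
        by auto
    qed simp
    finally show "\<exists>u::real^'d. norm u = 1 \<and>
                 Max ((\<lambda>j. \<bar>ray_deriv (grad_pair N (sgn (\<chi> i. real_of_int (k $ i)))) u j\<bar>) ` {0..p}) \<ge> \<sigma>"
      using uj[of c] c CU unfolding v_def by (intro exI[of _ "uu c"]) auto
  qed
  ultimately show ?thesis by blast
qed

end
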